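(* Let $M\subseteq\mathbb{R}^n$ be a closed convex set, $\alpha\ge0$, $p\in\mathbb{R}^n$, and $M'=(1+\alpha)M+p$, and assume $\operatorname{aff}(M)\ne\operatorname{aff}(M')$. Let $P=\operatorname{conv}(M\cup M')$. Then: (a) $P=\bigcup_{0\le\mu\le1}\big((1+\mu\alpha)M+\mu p\big)$. (b) Every $f\in P$ can be written as $f=(1+\mu\alpha)x+\mu p$ for some $0\le\mu\le1$ and $x\in M$. Furthermore, if $f=(1+\mu\alpha)x+\mu p$ with $x\in M$ and $\frac13\le\mu\le1$, then \[\tfrac14P+\tfrac34f\subseteq\operatorname{conv}(\{x\}\cup M')\subseteq P.\] *)

theory Defs
  imports "HOL-Analysis.Analysis"
begin

end

theory Submission
  imports Defs
begin

theorem lemma5p2: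
  fixes M M' P :: "'a::euclidean_space set" and \<alpha> :: real and p :: 'a
  assumes "closed M" and "convex M" and "\<alpha> \<ge> 0"
    and M'_def: "M' = (\<lambda>x. (1 + \<alpha>) *\<^sub>R x + p) ` M"
    and "affine hull M \<noteq> affine hull M'"
    and P_def: "P = convex hull (M \<union> M')"
  shows "(P = (\<Union>\<mu>\<in>{0..1}. (\<lambda>x. (1 + \<mu> * \<alpha>) *\<^sub>R x + \<mu> *\<^sub>R p) ` M))
    \<and> (\<forall>f\<in>P. \<exists>\<mu>\<in>{0..1}. \<exists>x\<in>M. f = (1 + \<mu> * \<alpha>) *\<^sub>R x + \<mu> *\<^sub>R p)
    \<and> (\<forall>f x \<mu>. x \<in> M \<and> 1/3 \<le> \<mu> \<and> \<mu> \<le> 1 \<and> f = (1 + \<mu> * \<alpha>) *\<^sub>R x + \<mu> *\<^sub>R p \<longrightarrow>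
           (\<lambda>y. (1/4) *\<^sub>R y + (3/4) *\<^sub>R f) ` P \<subseteq> convex hull (insert x M')
         \<and> convex hull (insert x M') \<subseteq> P)"
proof -
  define U where "U = (\<Union>\<mu>\<in>{0..1}. (\<lambda>x. (1 + \<mu> * \<alpha>) *\<^sub>R x + \<mu> *\<^sub>R p) ` M)"
  have Mne: "M \<noteq> {}" using assms(5) M'_def by auto
  have cM': "convex M'"
  proof -
    have "M' = (\<lambda>x. p + (1 + \<alpha>) *\<^sub>R x) ` M" using M'_def by (simp add: add.commute)
    thus ?thesis using convex_affinity[OF assms(2)] by simp
  qed
  have M'ne: "M' \<noteq> {}" using Mne M'_def by auto
  have cP: "convex P" using P_def by simp
  have MP: "M \<subseteq> P" using P_def hull_subset[of "M \<union> M'" convex] by auto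
  have M'P: "M' \<subseteq> P" using P_def hull_subset[of "M \<union> M'" convex] by auto
  have UP: "U \<subseteq> P"
  proof
    fix f assume "f \<in> U"
    then obtain \<mu> x where mu: "0 \<le> \<mu>" "\<mu> \<le> 1" and x: "x \<in> M"
      and f: "f = (1 + \<mu> * \<alpha>) *\<^sub>R x + \<mu> *\<^sub>R p" unfolding U_def by auto
    have "(1 - \<mu>) *\<^sub>R x + \<mu> *\<^sub>R ((1 + \<alpha>) *\<^sub>R x + p) \<in> P"
      apply (rule convexD[OF cP])
      using x MP M'P M'_def mu by auto
    moreover have "(1 - \<mu>) *\<^sub>R x + \<mu> *\<^sub>R ((1 + \<alpha>) *\<^sub>R x + p) = f"
      unfolding f by (simp add: algebra_simps)
    ultimately show "f \<in> P" by simp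
  qed
  have PU: "P \<subseteq> U"
  proof
    fix f assume "f \<in> P"
    then obtain u v s t' where uv: "u \<ge> 0" "v \<ge> 0" "u + v = 1" and s: "s \<in> M" and t': "t' \<in> M'"
      and f: "f = u *\<^sub>R s + v *\<^sub>R t'"
      using convex_hull_union_two[OF assms(2) Mne cM' M'ne] P_def by auto
    obtain t where t: "t \<in> M" and tt: "t' = (1 + \<alpha>) *\<^sub>R t + p" using t' M'_def by auto
    define d where "d = 1 + v * \<alpha>"
    have dpos: "d > 0" unfolding d_def using uv assms(3) by (simp add: add_pos_nonneg)
    define x where "x = (u / d) *\<^sub>R s + (v * (1 + \<alpha>) / d) *\<^sub>R t"
    have "x \<in> M" unfolding x_def
      apply (rule convexD[OF assms(2) s t])
      using uv dpos assms(3) apply simp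
      using uv dpos assms(3) apply simp
    proof -
      have "u + v * (1 + \<alpha>) = d" unfolding d_def using uv by (simp add: algebra_simps)
      thus "u / d + v * (1 + \<alpha>) / d = 1" using dpos by (simp add: add_divide_distrib[symmetric])
    qed
    moreover have "f = (1 + v * \<alpha>) *\<^sub>R x + v *\<^sub>R p"
    proof -
      have dx: "d *\<^sub>R x = u *\<^sub>R s + (v * (1 + \<alpha>)) *\<^sub>R t"
        unfolding x_def using dpos by (simp add: scaleR_add_right)
      have "(1 + v * \<alpha>) *\<^sub>R x = d *\<^sub>R x" by (simp add: d_def)
      thus ?thesis unfolding f tt dx by (simp add: algebra_simps)
    qed
    ultimately show "f \<in> U" unfolding U_def using uv by auto
  qed
  have PeqU: "P = U" using UP PU by blast
  have part3: "(\<lambda>y. (1/4) *\<^sub>R y + (3/4) *\<^sub>R f) ` P \<subseteq> convex hull (insert x M')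
         \<and> convex hull (insert x M') \<subseteq> P"
    if x: "x \<in> M" and mu: "1/3 \<le> \<mu>" "\<mu> \<le> 1" and f: "f = (1 + \<mu> * \<alpha>) *\<^sub>R x + \<mu> *\<^sub>R p"
    for f x \<mu>
  proof
    show "convex hull (insert x M') \<subseteq> P"
      using x MP M'P cP by (intro hull_minimal) auto
    show "(\<lambda>y. (1/4) *\<^sub>R y + (3/4) *\<^sub>R f) ` P \<subseteq> convex hull (insert x M')"
    proof
      fix w assume "w \<in> (\<lambda>y. (1/4) *\<^sub>R y + (3/4) *\<^sub>R f) ` P"
      then obtain g where g: "g \<in> P" and w: "w = (1/4) *\<^sub>R g + (3/4) *\<^sub>R f" by auto
      then obtain \<nu> y where nu: "0 \<le> \<nu>" "\<nu> \<le> 1" and y: "y \<in> M"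
        and gy: "g = (1 + \<nu> * \<alpha>) *\<^sub>R y + \<nu> *\<^sub>R p" using PeqU unfolding U_def by auto
      define s where "s = (3 * \<mu> + \<nu>) / 4"
      have spos: "s > 0" unfolding s_def using mu nu by simp
      have sle: "s \<le> 1" unfolding s_def using mu nu by simp
      define b where "b = (1 + \<nu> * \<alpha>) / (4 * s * (1 + \<alpha>))"
      have b0: "b \<ge> 0" unfolding b_def using spos assms(3) nu by simp
      have key: "(3 * \<mu> + \<nu>) * (1 + \<alpha>) \<ge> 1 + \<nu> * \<alpha>"
      proof -
        have "3 * \<mu> * (1 + \<alpha>) \<ge> 3 * \<mu>" using mu assms(3) by simp
        hence "3 * \<mu> * (1 + \<alpha>) \<ge> 1" using mu by linarith
        moreover have "\<nu> * (1 + \<alpha>) \<ge> \<nu> * \<alpha>" using nu by (simp add: algebra_simps)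
        ultimately show ?thesis by (simp add: algebra_simps)
      qed
      have kk: "1 + \<nu> * \<alpha> \<le> 4 * s * (1 + \<alpha>)" using key unfolding s_def by (simp add: algebra_simps)
      have pp: "0 < 4 * s * (1 + \<alpha>)" using spos assms(3) by simp
      have b1: "b \<le> 1" unfolding b_def using divide_le_eq_1_pos[OF pp] kk by simp
      define z where "z = (1 - b) *\<^sub>R x + b *\<^sub>R y"
      have zM: "z \<in> M" unfolding z_def by (rule convexD[OF assms(2) x y]) (use b0 b1 in auto)
      have z'M': "(1 + \<alpha>) *\<^sub>R z + p \<in> M'" using zM M'_def by auto
      have hx: "x \<in> convex hull (insert x M')" by (simp add: hull_inc)
      have hz: "(1 + \<alpha>) *\<^sub>R z + p \<in> convex hull (insert x M')" using z'M' by (simp add: hull_inc)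
      have mem: "(1 - s) *\<^sub>R x + s *\<^sub>R ((1 + \<alpha>) *\<^sub>R z + p) \<in> convex hull (insert x M')"
        by (rule convexD[OF convex_convex_hull hx hz]) (use spos sle in auto)
      have cy: "s * (1 + \<alpha>) * b = (1 + \<nu> * \<alpha>) / 4"
      proof -
        have "(4 * s * (1 + \<alpha>)) * b = 1 + \<nu> * \<alpha>" unfolding b_def using spos assms(3) by simp
        thus ?thesis by (simp add: algebra_simps)
      qed
      have e1: "(1 - s) *\<^sub>R x + s *\<^sub>R ((1 + \<alpha>) *\<^sub>R z + p)
          = (1 - s + s * (1 + \<alpha>) * (1 - b)) *\<^sub>R x + (s * (1 + \<alpha>) * b) *\<^sub>R y + s *\<^sub>R p"
        unfolding z_def by (simp add: algebra_simps)
      have e2: "w = ((3/4) * (1 + \<mu> * \<alpha>)) *\<^sub>R x + ((1 + \<nu> * \<alpha>) / 4) *\<^sub>R y + s *\<^sub>R p"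
        unfolding w gy f s_def by (simp add: algebra_simps add_divide_distrib)
      have cx: "1 - s + s * (1 + \<alpha>) * (1 - b) = (3/4) * (1 + \<mu> * \<alpha>)"
      proof -
        have "1 - s + s * (1 + \<alpha>) * (1 - b) = 1 + s * \<alpha> - s * (1 + \<alpha>) * b"
          by (simp add: algebra_simps)
        also have "\<dots> = 1 + s * \<alpha> - (1 + \<nu> * \<alpha>) / 4" using cy by simp
        also have "\<dots> = (3/4) * (1 + \<mu> * \<alpha>)" unfolding s_def by (simp add: field_simps)
        finally show ?thesis .
      qed
      show "w \<in> convex hull (insert x M')" using mem e1 e2 cx cy by simp
    qed
  qed
  show ?thesis using PeqU part3 unfolding U_def by blast
qed

end
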